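(* Let $f:\mathbb{R}_+\to\mathbb{R}$ be a real-valued function with $f\in GM$. If the improper integral $\int_0^\infty f(t)\,dt$ converges, then $t f(t)\to 0$ as $t\to\infty$.
   Context: $\mathbb{R}_+=[0,\infty)$. All functions $f:\mathbb{R}_+\to\mathbb{C}$ considered are locally integrable, locally of bounded variation on $(0,\infty)$, and satisfy $f(t)\to 0$ as $t\to\infty$. Integrals over infinite intervals (and integrals $\int_0^\infty$) are understood as improper Riemann (Riemann–Stieltjes) integrals. Such an $f$ is called general monotone, written $f\in GM$, if there exist constants $C>1$ and $\lambda>1$ such that for every $x>0$, $$\int_x^{2x}|df(t)|\le C\int_{x/\lambda}^{\lambda x}\frac{|f(t)|}{t}\,dt,$$ where $|df|$ denotes the total variation measure of $f$. *)

theory Defs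
  imports "HOL-Analysis.Analysis"
begin

definition variation_sums :: "(real \<Rightarrow> real) \<Rightarrow> real \<Rightarrow> real \<Rightarrow> real set" where
  "variation_sums f a b =
     {(\<Sum>i<n. \<bar>f (t (Suc i)) - f (t i)\<bar>) | n t.
        t 0 = a \<and> t n = b \<and> (\<forall>i<n. t i \<le> t (Suc i))}"

definition bv_on :: "(real \<Rightarrow> real) \<Rightarrow> real \<Rightarrow> real \<Rightarrow> bool" where
  "bv_on f a b \<longleftrightarrow> bdd_above (variation_sums f a b)"

text \<open>Total variation of f on [a,b], i.e. the Stieltjes integral of |df| over [a,b].\<close>
definition total_variation :: "(real \<Rightarrow> real) \<Rightarrow> real \<Rightarrow> real \<Rightarrow> real" where
  "total_variation f a b = Sup (variation_sums f a b)"

definition GM :: "(real \<Rightarrow> real) \<Rightarrow> bool" where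
  "GM f \<longleftrightarrow>
     (\<forall>b\<ge>0. f absolutely_integrable_on {0..b}) \<and>
     (\<forall>a b. 0 < a \<longrightarrow> a \<le> b \<longrightarrow> bv_on f a b) \<and>
     (f \<longlongrightarrow> 0) at_top \<and>
     (\<exists>C>1. \<exists>lam>1. \<forall>x>0.
        total_variation f x (2 * x) \<le> C * integral {x / lam .. lam * x} (\<lambda>t. \<bar>f t\<bar> / t))"

end

theory Submission
  imports Defs
begin

lemma vs_mem:
  assumes "t 0 = a" "t n = b" "\<forall>i<n. t i \<le> t (Suc i)"
  shows "(\<Sum>i<n. \<bar>f (t (Suc i)) - f (t i)\<bar>) \<in> variation_sums f a b"
  using assms unfolding variation_sums_def by blast

lemma var_bound:
  assumes bv: "bv_on f a b" and s: "a \<le> s" "s \<le> b" and t: "a \<le> t" "t \<le> b"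
  shows "\<bar>f t - f s\<bar> \<le> total_variation f a b"
proof -
  define p where "p = (\<lambda>i::nat. if i = 0 then a else if i = 1 then min s t else if i = 2 then max s t else b)"
  have "(\<Sum>i<3. \<bar>f (p (Suc i)) - f (p i)\<bar>) \<in> variation_sums f a b"
    by (rule vs_mem) (use s t in \<open>auto simp: p_def less_Suc_eq\<close>)
  hence "(\<Sum>i<3. \<bar>f (p (Suc i)) - f (p i)\<bar>) \<le> total_variation f a b"
    using bv unfolding total_variation_def bv_on_def by (intro cSup_upper)
  moreover have "\<bar>f t - f s\<bar> \<le> (\<Sum>i<3. \<bar>f (p (Suc i)) - f (p i)\<bar>)"
    by (simp add: p_def numeral_3_eq_3 lessThan_Suc min_def max_def abs_minus_commute)
  ultimately show ?thesis by linarith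
qed

lemma var_nonneg:
  assumes "bv_on f a b" "a \<le> b" shows "0 \<le> total_variation f a b"
  using var_bound[OF assms(1), of a a] assms by simp

lemma sum_split_add: "(\<Sum>i<n1+n2. g i) = (\<Sum>i<n1. g i) + (\<Sum>k<n2. g (n1+k))"
  for g :: "nat \<Rightarrow> real"
  by (induction n2) (simp_all add: add_ac)

lemma vs_concat:
  assumes "s1 \<in> variation_sums f a b" "s2 \<in> variation_sums f b c"
  shows "s1 + s2 \<in> variation_sums f a c"
proof -
  obtain n1 t1 where 1: "s1 = (\<Sum>i<n1. \<bar>f (t1 (Suc i)) - f (t1 i)\<bar>)" "t1 0 = a" "t1 n1 = b"
    "\<forall>i<n1. t1 i \<le> t1 (Suc i)" using assms(1) unfolding variation_sums_def by blast
  obtain n2 t2 where 2: "s2 = (\<Sum>i<n2. \<bar>f (t2 (Suc i)) - f (t2 i)\<bar>)" "t2 0 = b" "t2 n2 = c"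
    "\<forall>i<n2. t2 i \<le> t2 (Suc i)" using assms(2) unfolding variation_sums_def by blast
  define t where "t = (\<lambda>i. if i \<le> n1 then t1 i else t2 (i - n1))"
  have ts: "t (n1 + k) = t2 k" for k using 1 2 by (cases k) (auto simp: t_def)
  have "(\<Sum>i<n1+n2. \<bar>f (t (Suc i)) - f (t i)\<bar>) =
        (\<Sum>i<n1. \<bar>f (t (Suc i)) - f (t i)\<bar>) + (\<Sum>k<n2. \<bar>f (t (Suc (n1+k))) - f (t (n1+k))\<bar>)"
    by (rule sum_split_add)
  also have "(\<Sum>i<n1. \<bar>f (t (Suc i)) - f (t i)\<bar>) = s1"
    unfolding 1 by (intro sum.cong) (auto simp: t_def)
  also have "(\<Sum>k<n2. \<bar>f (t (Suc (n1+k))) - f (t (n1+k))\<bar>) = s2"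
    unfolding 2 using ts by (metis add_Suc_right)
  finally have eq: "(\<Sum>i<n1+n2. \<bar>f (t (Suc i)) - f (t i)\<bar>) = s1 + s2" .
  have mono: "\<forall>i<n1+n2. t i \<le> t (Suc i)"
  proof (intro allI impI)
    fix i assume i: "i < n1 + n2"
    show "t i \<le> t (Suc i)"
    proof (cases "i < n1")
      case True thus ?thesis using 1 by (auto simp: t_def)
    next
      case False
      then obtain k where k: "i = n1 + k" "k < n2" using i by (metis add_less_imp_less_left le_Suc_ex not_less)
      thus ?thesis using ts[of k] ts[of "Suc k"] 2 by simp
    qed
  qed
  have "t 0 = a" using 1 by (simp add: t_def)
  moreover have "t (n1+n2) = c" using ts[of n2] 2 by simp
  ultimately show ?thesis using vs_mem[OF _ _ mono, of a c f] eq by simp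
qed

lemma vs_ne: "a \<le> b \<Longrightarrow> variation_sums f a b \<noteq> {}"
  using vs_mem[of "\<lambda>i. if i = 0 then a else b" a 1 b f] by auto

lemma var_super2:
  assumes "a \<le> b" "b \<le> c" "bv_on f a b" "bv_on f b c" "bv_on f a c"
  shows "total_variation f a b + total_variation f b c \<le> total_variation f a c"
proof -
  have up: "s1 + s2 \<le> total_variation f a c" if "s1 \<in> variation_sums f a b" "s2 \<in> variation_sums f b c" for s1 s2
    using vs_concat[OF that] assms(5) unfolding total_variation_def bv_on_def by (intro cSup_upper)
  have "total_variation f a b \<le> total_variation f a c - s2" if "s2 \<in> variation_sums f b c" for s2
    unfolding total_variation_def using vs_ne[OF assms(1)]
  proof (intro cSup_least)
    fix x assume "x \<in> variation_sums f a b"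
    from up[OF this that] show "x \<le> Sup (variation_sums f a c) - s2"
      unfolding total_variation_def by linarith
  qed auto
  hence "total_variation f b c \<le> total_variation f a c - total_variation f a b"
    unfolding total_variation_def using vs_ne[OF assms(2)]
  proof (intro cSup_least)
    fix x assume x: "x \<in> variation_sums f b c"
    have "total_variation f a b \<le> total_variation f a c - x" using x by fact
    thus "x \<le> Sup (variation_sums f a c) - Sup (variation_sums f a b)"
      unfolding total_variation_def by linarith
  qed auto
  thus ?thesis by simp
qed

lemma var_superN:
  assumes bv: "\<And>u v. 0 < u \<Longrightarrow> u \<le> v \<Longrightarrow> bv_on f u v"
    and mono: "\<And>j. a j \<le> a (Suc j)" and pos: "0 < a 0"
  shows "(\<Sum>j<N. total_variation f (a j) (a (Suc j))) \<le> total_variation f (a 0) (a N)"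
proof (induction N)
  case 0 show ?case using var_nonneg[OF bv[OF pos order_refl]] by simp
next
  case (Suc N)
  have le: "a 0 \<le> a N" for N by (induction N) (auto intro: order_trans mono)
  have "(\<Sum>j<Suc N. total_variation f (a j) (a (Suc j))) \<le>
      total_variation f (a 0) (a N) + total_variation f (a N) (a (Suc N))" using Suc by simp
  also have "\<dots> \<le> total_variation f (a 0) (a (Suc N))"
    by (rule var_super2) (use le[of N] le[of "Suc N"] mono[of N] pos in \<open>auto intro!: bv\<close>)
  finally show ?case .
qed

lemma integral_sumN:
  fixes g :: "real \<Rightarrow> real"
  assumes mono: "\<And>j. a j \<le> a (Suc j)" and int: "\<And>u v. a 0 \<le> u \<Longrightarrow> u \<le> v \<Longrightarrow> g integrable_on {u..v}"
  shows "integral {a 0..a N} g = (\<Sum>j<N. integral {a j..a (Suc j)} g)"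
proof (induction N)
  case 0 show ?case by simp
next
  case (Suc N)
  have le: "a 0 \<le> a N" for N by (induction N) (auto intro: order_trans mono)
  have "integral {a 0..a N} g + integral {a N..a (Suc N)} g = integral {a 0..a (Suc N)} g"
    by (rule Henstock_Kurzweil_Integration.integral_combine) (use le[of N] mono[of N] le[of "Suc N"] in \<open>auto intro!: int\<close>)
  thus ?case using Suc by simp
qed

lemma piece:
  fixes f :: "real \<Rightarrow> real"
  assumes ab: "a \<le> b" and bv: "bv_on f a b" and int: "(\<lambda>t. \<bar>f t\<bar>) integrable_on {a..b}"
  shows "integral {a..b} (\<lambda>t. \<bar>f t\<bar>) \<le> \<bar>integral {a..b} f\<bar> + (b - a) * total_variation f a b"
proof -
  have V0: "0 \<le> total_variation f a b" using var_nonneg[OF bv ab] .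
  consider "\<forall>t\<in>{a..b}. 0 \<le> f t" | "\<forall>t\<in>{a..b}. f t \<le> 0" | s r where "s \<in> {a..b}" "r \<in> {a..b}" "f s < 0" "f r > 0"
    by (meson not_le)
  thus ?thesis
  proof cases
    case 1
    hence "integral {a..b} (\<lambda>t. \<bar>f t\<bar>) = integral {a..b} f" by (intro integral_cong) auto
    moreover have "0 \<le> (b - a) * total_variation f a b" using V0 ab by simp
    ultimately show ?thesis by linarith
  next
    case 2
    hence "integral {a..b} (\<lambda>t. \<bar>f t\<bar>) = integral {a..b} (\<lambda>t. - f t)" by (intro integral_cong) auto
    hence "integral {a..b} (\<lambda>t. \<bar>f t\<bar>) = - integral {a..b} f" by simp
    moreover have "0 \<le> (b - a) * total_variation f a b" using V0 ab by simp
    ultimately show ?thesis by linarith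
  next
    case 3
    have pt: "\<bar>f t\<bar> \<le> total_variation f a b" if "t \<in> {a..b}" for t
    proof (cases "f t \<ge> 0")
      case True thus ?thesis using var_bound[OF bv, of s t] 3 that by auto
    next
      case False thus ?thesis using var_bound[OF bv, of t r] 3 that by auto
    qed
    have "integral {a..b} (\<lambda>t. \<bar>f t\<bar>) \<le> integral {a..b} (\<lambda>t. total_variation f a b)"
      by (rule integral_le) (use int pt in auto)
    thus ?thesis using ab by simp
  qed
qed

lemma block:
  fixes f :: "real \<Rightarrow> real" and n :: nat and \<epsilon> :: real
  assumes bv: "\<And>u v. 0 < u \<Longrightarrow> u \<le> v \<Longrightarrow> bv_on f u v"
    and intabs: "\<And>u v. 0 \<le> u \<Longrightarrow> (\<lambda>t. \<bar>f t\<bar>) integrable_on {u..v}"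
    and y: "y > 0" and n: "n > 0"
    and D: "\<And>u v. y \<le> u \<Longrightarrow> u \<le> v \<Longrightarrow> v \<le> 2*y \<Longrightarrow> \<bar>integral {u..v} f\<bar> \<le> \<epsilon>"
  shows "integral {y..2*y} (\<lambda>t. \<bar>f t\<bar>) \<le> n*\<epsilon> + (y/n) * total_variation f y (2*y)"
proof -
  define a where "a = (\<lambda>j::nat. y + real j * y / real n)"
  have mono: "a j \<le> a (Suc j)" for j using y n by (simp add: a_def divide_simps)
  have a0: "a 0 = y" and an: "a n = 2*y" using n by (auto simp: a_def)
  have "integral {a 0..a n} (\<lambda>t. \<bar>f t\<bar>) = (\<Sum>j<n. integral {a j..a (Suc j)} (\<lambda>t. \<bar>f t\<bar>))"
    by (rule integral_sumN[of a, OF mono]) (use y a0 in \<open>auto intro!: intabs\<close>)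
  also have "\<dots> \<le> (\<Sum>j<n. \<epsilon> + (y/n) * total_variation f (a j) (a (Suc j)))"
  proof (rule sum_mono)
    fix j assume j: "j \<in> {..<n}"
    have ge: "y \<le> a j" using y n by (simp add: a_def)
    have diff: "a (Suc j) - a j = y / n" by (simp add: a_def add_divide_distrib algebra_simps)
    have le2: "a (Suc j) \<le> 2*y"
    proof -
      have "real (Suc j) \<le> real n" using j by simp
      hence "real (Suc j) * y / real n \<le> real n * y / real n" using y n
        by (intro divide_right_mono mult_right_mono) auto
      thus ?thesis using n by (simp add: a_def)
    qed
    have "integral {a j..a (Suc j)} (\<lambda>t. \<bar>f t\<bar>) \<le> \<bar>integral {a j..a (Suc j)} f\<bar> + (a (Suc j) - a j) * total_variation f (a j) (a (Suc j))"
      by (rule piece) (use mono[of j] ge y in \<open>auto intro!: bv intabs\<close>)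
    also have "\<bar>integral {a j..a (Suc j)} f\<bar> \<le> \<epsilon>" using D[OF ge mono[of j] le2] .
    finally show "integral {a j..a (Suc j)} (\<lambda>t. \<bar>f t\<bar>) \<le> \<epsilon> + y / real n * total_variation f (a j) (a (Suc j))"
      unfolding diff by simp
  qed
  also have "\<dots> = n*\<epsilon> + (y/n) * (\<Sum>j<n. total_variation f (a j) (a (Suc j)))"
    by (simp add: sum.distrib sum_distrib_left)
  also have "\<dots> \<le> n*\<epsilon> + (y/n) * total_variation f (a 0) (a n)"
    using var_superN[of f a n, OF bv mono] y n a0 by (intro add_left_mono mult_left_mono) auto
  finally show ?thesis unfolding a0 an .
qed

definition Psi :: "(real \<Rightarrow> real) \<Rightarrow> real \<Rightarrow> real \<Rightarrow> real" where
  "Psi f M x = integral {x/M..M*x} (\<lambda>t. \<bar>f t\<bar>)"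

lemma Psi_nonneg: "0 \<le> Psi f M x"
  unfolding Psi_def by (cases "(\<lambda>t. \<bar>f t\<bar>) integrable_on {x/M..M*x}") (auto intro: integral_nonneg simp: not_integrable_integral)

lemma Vbound:
  fixes f :: "real \<Rightarrow> real"
  assumes gm: "total_variation f y (2*y) \<le> C * integral {y/lam..lam*y} (\<lambda>t. \<bar>f t\<bar> / t)"
    and intabs: "\<And>u v. 0 \<le> u \<Longrightarrow> (\<lambda>t. \<bar>f t\<bar>) integrable_on {u..v}"
    and y: "y > 0" and lam: "1 < lam" "lam \<le> M" and C: "C > 0"
  shows "total_variation f y (2*y) \<le> C * M / y * Psi f M y"
proof -
  have I: "integral {y/lam..lam*y} (\<lambda>t. \<bar>f t\<bar> / t) \<le> M / y * Psi f M y"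
  proof (cases "(\<lambda>t. \<bar>f t\<bar> / t) integrable_on {y/lam..lam*y}")
    case False
    hence "integral {y/lam..lam*y} (\<lambda>t. \<bar>f t\<bar> / t) = 0" by (simp add: not_integrable_integral)
    moreover have "0 \<le> M / y * Psi f M y" using Psi_nonneg y lam by simp
    ultimately show ?thesis by linarith
  next
    case True
    have pos: "0 \<le> y/lam" using y lam by simp
    have "integral {y/lam..lam*y} (\<lambda>t. \<bar>f t\<bar> / t) \<le> integral {y/lam..lam*y} (\<lambda>t. (lam/y) * \<bar>f t\<bar>)"
    proof (rule integral_le[OF True])
      show "(\<lambda>t. lam / y * \<bar>f t\<bar>) integrable_on {y / lam..lam * y}"
        using integrable_cmul[OF intabs[OF pos], of "lam/y" "lam*y"] by simp
      fix t assume t: "t \<in> {y / lam..lam * y}"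
      hence tp: "t > 0" using y lam by (auto intro: less_le_trans[OF _ t[simplified, THEN conjunct1]])
      have "1/t \<le> lam / y" using t tp y lam by (auto simp: field_simps)
      thus "\<bar>f t\<bar> / t \<le> lam / y * \<bar>f t\<bar>"
        using mult_right_mono[OF \<open>1/t \<le> lam/y\<close> abs_ge_zero[of "f t"]] by (simp add: divide_simps)
    qed
    also have "\<dots> = (lam/y) * integral {y/lam..lam*y} (\<lambda>t. \<bar>f t\<bar>)" by simp
    also have "integral {y/lam..lam*y} (\<lambda>t. \<bar>f t\<bar>) \<le> Psi f M y"
      unfolding Psi_def
    proof (rule integral_subset_le)
      show "{y / lam..lam * y} \<subseteq> {y / M..M * y}" using y lam
        by (auto simp: field_simps intro: order_trans)
    qed (use y lam in \<open>auto intro!: intabs\<close>)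
    hence "(lam/y) * integral {y/lam..lam*y} (\<lambda>t. \<bar>f t\<bar>) \<le> (lam/y) * Psi f M y"
      using y lam by (intro mult_left_mono) auto
    also have "\<dots> \<le> (M/y) * Psi f M y"
      using y lam Psi_nonneg[of f M y] by (intro mult_right_mono divide_right_mono) auto
    finally show ?thesis .
  qed
  have "total_variation f y (2*y) \<le> C * (M / y * Psi f M y)"
    using gm mult_left_mono[OF I, of C] C by linarith
  thus ?thesis by simp
qed

lemma recur:
  fixes f :: "real \<Rightarrow> real" and n p :: nat and \<epsilon> :: real
  assumes bv: "\<And>u v. 0 < u \<Longrightarrow> u \<le> v \<Longrightarrow> bv_on f u v"
    and intabs: "\<And>u v. 0 \<le> u \<Longrightarrow> (\<lambda>t. \<bar>f t\<bar>) integrable_on {u..v}"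
    and gm: "\<And>y. y > 0 \<Longrightarrow> total_variation f y (2*y) \<le> C * integral {y/lam..lam*y} (\<lambda>t. \<bar>f t\<bar> / t)"
    and lam: "1 < lam" "lam \<le> M" and C: "C > 0" and M: "M = 2^p"
    and x: "x > 0" and n: "n > 0"
    and D: "\<And>u v. x/M \<le> u \<Longrightarrow> u \<le> v \<Longrightarrow> v \<le> M*x \<Longrightarrow> \<bar>integral {u..v} f\<bar> \<le> \<epsilon>"
  shows "Psi f M x \<le> 2*p*n*\<epsilon> + (C*M/n) * (\<Sum>i<2*p. Psi f M (x*2^i/M))"
proof -
  define a where "a = (\<lambda>i::nat. x*2^i/M)"
  have Mpos: "M > 0" using M by simp
  have aS: "a (Suc i) = 2 * a i" for i by (simp add: a_def)
  have apos: "a i > 0" for i using x Mpos by (simp add: a_def)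
  have mono: "a j \<le> a (Suc j)" for j using apos[of j] by (simp add: aS)
  have amono: "i \<le> j \<Longrightarrow> a i \<le> a j" for i j using x Mpos
    by (simp add: a_def divide_right_mono)
  have a0: "a 0 = x/M" by (simp add: a_def)
  have "(2::real)^(2*p) = 2^p * 2^p" by (simp add: mult_2 power_add)
  hence aN: "a (2*p) = M*x" using Mpos by (simp add: a_def M field_simps)
  have "Psi f M x = integral {a 0..a (2*p)} (\<lambda>t. \<bar>f t\<bar>)" unfolding Psi_def a0 aN ..
  also have "\<dots> = (\<Sum>i<2*p. integral {a i..a (Suc i)} (\<lambda>t. \<bar>f t\<bar>))"
    by (rule integral_sumN[of a, OF mono]) (use apos[of 0] in \<open>auto intro!: intabs\<close>)
  also have "\<dots> \<le> (\<Sum>i<2*p. n*\<epsilon> + (C*M/n) * Psi f M (a i))"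
  proof (rule sum_mono)
    fix i assume i: "i \<in> {..<2*p}"
    have "integral {a i..2 * a i} (\<lambda>t. \<bar>f t\<bar>) \<le> n*\<epsilon> + (a i/n) * total_variation f (a i) (2 * a i)"
    proof (rule block[OF bv intabs apos n])
      fix u v assume uv: "a i \<le> u" "u \<le> v" "v \<le> 2 * a i"
      show "\<bar>integral {u..v} f\<bar> \<le> \<epsilon>"
      proof (rule D)
        show "x / M \<le> u" using amono[of 0 i] a0 uv by simp
        show "v \<le> M * x" using amono[of "Suc i" "2*p"] aS[of i] aN uv i by simp
      qed (use uv in auto)
    qed auto
    also have "(a i/n) * total_variation f (a i) (2 * a i) \<le> (a i/n) * (C * M / a i * Psi f M (a i))"
      using Vbound[OF gm[OF apos] intabs apos lam C] apos[of i] by (intro mult_left_mono) auto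
    also have "(a i/n) * (C * M / a i * Psi f M (a i)) = (C*M/n) * Psi f M (a i)"
      using apos[of i] by (simp add: field_simps)
    finally show "integral {a i..a (Suc i)} (\<lambda>t. \<bar>f t\<bar>) \<le> n*\<epsilon> + (C*M/n) * Psi f M (a i)"
      unfolding aS by simp
  qed
  also have "\<dots> = 2*p*n*\<epsilon> + (C*M/n) * (\<Sum>i<2*p. Psi f M (x*2^i/M))"
    by (simp add: sum.distrib sum_distrib_left a_def)
  finally show ?thesis .
qed

lemma abstract_bounded:
  fixes \<Psi> :: "real \<Rightarrow> real" and g :: "nat \<Rightarrow> real \<Rightarrow> real" and q :: nat
    and M X1 B0 A \<theta> :: real
  assumes M: "M \<ge> 1" and X1: "X1 > 0" and nonneg: "\<And>x. 0 \<le> \<Psi> x"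
    and lin: "\<And>x. x \<ge> X1 \<Longrightarrow> \<Psi> x \<le> M*x"
    and B0: "\<And>x. X1 \<le> x \<Longrightarrow> x \<le> M*X1 \<Longrightarrow> \<Psi> x \<le> B0"
    and rng: "\<And>i x. i < q \<Longrightarrow> x > 0 \<Longrightarrow> x/M \<le> g i x \<and> g i x \<le> M*x"
    and rec: "\<And>x. x \<ge> X1 \<Longrightarrow> \<Psi> x \<le> A + \<theta> * (\<Sum>i<q. \<Psi> (g i x))"
    and coef: "q*\<theta>*M \<le> 1/2" and th: "\<theta> \<ge> 0" and A: "A \<ge> 0"
    and R: "R > 0" and x0: "x0 \<ge> X1"
  shows "\<Psi> x0 \<le> max B0 (2*A) * (1 + x0/R)"
proof -
  define r where "r = (\<lambda>x. \<Psi> x / (1 + x/R))"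
  define Q where "Q = Sup (r ` {X1..})"
  have den: "1 + x/R \<ge> 1" if "x \<ge> X1" for x using that X1 R by simp
  have rbd: "r x \<le> M*R" if "x \<ge> X1" for x
  proof -
    have "M*R*(1 + x/R) = M*R + M*x" using R by (simp add: field_simps)
    moreover have "M*R \<ge> 0" using R M by simp
    ultimately have "\<Psi> x \<le> M*R*(1 + x/R)" using lin[OF that] by linarith
    thus ?thesis using den[OF that] unfolding r_def by (simp add: divide_le_eq)
  qed
  have bdd: "bdd_above (r ` {X1..})" using rbd by (auto intro!: bdd_aboveI)
  have rup: "r x \<le> Q" if "x \<ge> X1" for x unfolding Q_def using bdd that by (intro cSup_upper) auto
  have "r X1 \<ge> 0" unfolding r_def using nonneg[of X1] den[of X1] by simp
  hence Q0: "Q \<ge> 0" using rup[of X1] by simp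
  have Psi_Q: "\<Psi> x \<le> Q * (1 + x/R)" if "x \<ge> X1" for x
    using rup[OF that] den[OF that] unfolding r_def by (simp add: divide_le_eq)
  have "r x \<le> max B0 (A + Q/2)" if x: "x \<ge> X1" for x
  proof (cases "x \<le> M*X1")
    case True
    have "r x \<le> \<Psi> x" unfolding r_def using den[OF x] nonneg[of x]
      by (simp add: divide_le_eq mult_le_cancel_left1)
    thus ?thesis using B0[OF x True] by simp
  next
    case False
    hence xM: "x \<ge> M*X1" by simp
    have xpos: "x > 0" using x X1 by simp
    have each: "\<Psi> (g i x) \<le> Q * M * (1 + x/R)" if i: "i < q" for i
    proof -
      have "X1 \<le> x/M" using xM M by (simp add: field_simps)
      hence gx: "g i x \<ge> X1" using rng[OF i xpos] by simp
      have "\<Psi> (g i x) \<le> Q * (1 + g i x/R)" by (rule Psi_Q[OF gx])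
      also have "\<dots> \<le> Q * (1 + M*x/R)" using rng[OF i xpos] R Q0
        by (intro mult_left_mono add_left_mono divide_right_mono) auto
      also have "\<dots> \<le> Q * (M * (1 + x/R))" using M Q0 R xpos
        by (intro mult_left_mono) (auto simp: field_simps)
      finally show ?thesis by simp
    qed
    have "(\<Sum>i<q. \<Psi> (g i x)) \<le> (\<Sum>i<q. Q * M * (1 + x/R))" by (rule sum_mono) (use each in auto)
    hence "\<theta> * (\<Sum>i<q. \<Psi> (g i x)) \<le> \<theta> * (q * (Q * M * (1 + x/R)))" using th
      by (intro mult_left_mono) auto
    also have "\<dots> = (q*\<theta>*M) * Q * (1 + x/R)" by simp
    also have "\<dots> \<le> (1/2) * Q * (1 + x/R)" using coef Q0 den[OF x]
      by (intro mult_right_mono) auto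
    finally have "\<Psi> x \<le> A + (1/2) * Q * (1 + x/R)" using rec[OF x] by linarith
    also have "\<dots> \<le> (A + Q/2) * (1 + x/R)"
    proof -
      have "A * 1 \<le> A * (1 + x/R)" using A den[OF x] by (intro mult_left_mono) auto
      thus ?thesis by (simp add: algebra_simps)
    qed
    finally have "r x \<le> A + Q/2" unfolding r_def using den[OF x] by (simp add: divide_le_eq)
    thus ?thesis by simp
  qed
  hence "Q \<le> max B0 (A + Q/2)" unfolding Q_def by (intro cSup_least) auto
  hence "Q \<le> max B0 (2*A)" by (auto simp: max_def split: if_splits)
  hence "Q * (1 + x0/R) \<le> max B0 (2*A) * (1 + x0/R)" using den[OF x0] by (intro mult_right_mono) auto
  thus ?thesis using Psi_Q[OF x0] by linarith
qed

lemma abstract_decay: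
  fixes \<Psi> :: "real \<Rightarrow> real" and g :: "nat \<Rightarrow> real \<Rightarrow> real" and q :: nat
    and M X1 B0 A \<theta> :: real
  assumes M: "M \<ge> 1" and X1: "X1 > 0" and nonneg: "\<And>x. 0 \<le> \<Psi> x"
    and lin: "\<And>x. x \<ge> X1 \<Longrightarrow> \<Psi> x \<le> M*x"
    and B0: "\<And>x. X1 \<le> x \<Longrightarrow> x \<le> M*X1 \<Longrightarrow> \<Psi> x \<le> B0"
    and rng: "\<And>i x. i < q \<Longrightarrow> x > 0 \<Longrightarrow> x/M \<le> g i x \<and> g i x \<le> M*x"
    and rec: "\<And>x. x \<ge> X1 \<Longrightarrow> \<Psi> x \<le> A + \<theta> * (\<Sum>i<q. \<Psi> (g i x))"
    and coef: "q*\<theta>*M \<le> 1/2" and th: "\<theta> \<ge> 0" and A: "A \<ge> 0" and e: "(e::real) > 0"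
  shows "\<exists>X. \<forall>x\<ge>X. \<Psi> x \<le> 2*A + e"
proof -
  define S where "S = max B0 (2*A)"
  have S0: "S \<ge> 0" using A by (simp add: S_def)
  have bnd: "\<Psi> x \<le> S" if x: "x \<ge> X1" for x
  proof (rule ccontr)
    assume "\<not> ?thesis"
    hence d: "\<Psi> x - S > 0" by simp
    have xpos: "x > 0" using x X1 by simp
    define R where "R = (S*x+1)/(\<Psi> x - S)"
    have "S*x+1 > 0" using S0 xpos by (simp add: add_nonneg_pos)
    hence R: "R > 0" using d by (simp add: R_def)
    have "\<Psi> x \<le> S * (1 + x/R)"
      using abstract_bounded[OF M X1 nonneg lin B0 rng rec coef th A R x] by (simp add: S_def)
    also have "\<dots> = S + S*x*(\<Psi> x - S)/(S*x+1)" using d S0 xpos by (simp add: R_def field_simps)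
    finally have le: "\<Psi> x \<le> S + S*x*(\<Psi> x - S)/(S*x+1)" .
    have h: "S*x*(\<Psi> x - S) < (S*x+1)*(\<Psi> x - S)" using d by (simp add: algebra_simps)
    have "S*x+1 > 0" using S0 xpos by (simp add: add_nonneg_pos)
    hence "S*x*(\<Psi> x - S)/(S*x+1) < \<Psi> x - S" using h by (simp add: divide_less_eq mult.commute)
    thus False using le by linarith
  qed
  have qth: "q*\<theta> \<le> 1/2"
  proof -
    have "q*\<theta> \<ge> 0" using th by simp
    hence "q*\<theta>*1 \<le> q*\<theta>*M" using M by (intro mult_left_mono) auto
    thus ?thesis using coef by linarith
  qed
  have Mk: "M^k \<ge> 1" for k using M by (simp add: one_le_power)
  have P: "\<forall>x \<ge> M^k * X1. \<Psi> x \<le> 2*A + S/2^k" for k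
  proof (induction k)
    case 0 show ?case using bnd A by force
  next
    case (Suc k)
    show ?case
    proof (intro allI impI)
      fix x assume x: "x \<ge> M^Suc k * X1"
      have "M^Suc k * X1 \<ge> X1" using Mk[of "Suc k"] X1 by (simp add: mult_le_cancel_right1)
      hence x1: "x \<ge> X1" using x by linarith
      have xpos: "x > 0" using x1 X1 by simp
      have "x/M \<ge> M^k * X1" using x M by (simp add: field_simps)
      hence each: "\<Psi> (g i x) \<le> 2*A + S/2^k" if "i < q" for i
        using Suc rng[OF that xpos] by auto
      have "(\<Sum>i<q. \<Psi> (g i x)) \<le> q * (2*A + S/2^k)"
        using sum_mono[of "{..<q}" "\<lambda>i. \<Psi> (g i x)" "\<lambda>i. 2*A + S/2^k"] each by simp
      hence "\<theta> * (\<Sum>i<q. \<Psi> (g i x)) \<le> (q*\<theta>) * (2*A + S/2^k)" using th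
        by (simp add: mult_left_mono mult.assoc mult.left_commute)
      also have "\<dots> \<le> (1/2) * (2*A + S/2^k)" using qth A S0
        by (intro mult_right_mono) auto
      finally show "\<Psi> x \<le> 2*A + S/2^Suc k" using rec[OF x1] by simp
    qed
  qed
  obtain k where k: "S/e < 2^k" using real_arch_pow[of 2 "S/e"] by auto
  hence "S/2^k < e" using e by (simp add: field_simps)
  thus ?thesis using P[of k] by (intro exI[of _ "M^k*X1"]) force
qed

lemma final_bound:
  fixes f :: "real \<Rightarrow> real"
  assumes bv: "\<And>u v. 0 < u \<Longrightarrow> u \<le> v \<Longrightarrow> bv_on f u v"
    and intabs: "\<And>u v. 0 \<le> u \<Longrightarrow> (\<lambda>t. \<bar>f t\<bar>) integrable_on {u..v}"
    and gm: "total_variation f x (2*x) \<le> C * integral {x/lam..lam*x} (\<lambda>t. \<bar>f t\<bar> / t)"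
    and lam: "1 < lam" "lam \<le> M" "2 \<le> M" and C: "C > 0" and x: "x > 0"
  shows "\<bar>x * f x\<bar> \<le> (1 + C*M) * Psi f M x"
proof -
  define V where "V = total_variation f x (2*x)"
  have pt: "\<bar>f x\<bar> \<le> \<bar>f t\<bar> + V" if "t \<in> {x..2*x}" for t
    using var_bound[OF bv[OF x], of "2*x" x t] that x unfolding V_def by auto
  have x0: "0 \<le> x" using x by simp
  have "integral {x..2*x} (\<lambda>t. \<bar>f x\<bar>) \<le> integral {x..2*x} (\<lambda>t. \<bar>f t\<bar> + V)"
    by (rule integral_le) (use pt intabs[OF x0] in \<open>auto intro!: integrable_add\<close>)
  also have "\<dots> = integral {x..2*x} (\<lambda>t. \<bar>f t\<bar>) + x * V"
    using intabs[OF x0] x by (subst integral_add) auto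
  finally have 1: "x * \<bar>f x\<bar> \<le> integral {x..2*x} (\<lambda>t. \<bar>f t\<bar>) + x * V" using x by simp
  have 2: "integral {x..2*x} (\<lambda>t. \<bar>f t\<bar>) \<le> Psi f M x"
    unfolding Psi_def
  proof (rule integral_subset_le)
    show "{x..2*x} \<subseteq> {x/M..M*x}" using x lam
      by (auto simp: field_simps intro: order_trans mult_right_mono)
  qed (use x lam in \<open>auto intro!: intabs\<close>)
  have "V \<le> C * M / x * Psi f M x" unfolding V_def
    by (rule Vbound[OF gm intabs x lam(1,2) C])
  hence 3: "x * V \<le> C * M * Psi f M x" using x by (simp add: field_simps)
  have "\<bar>x * f x\<bar> = x * \<bar>f x\<bar>" using x by (simp add: abs_mult)
  thus ?thesis using 1 2 3 by (simp add: algebra_simps)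
qed

theorem theorem1:
  fixes f :: "real \<Rightarrow> real"
  assumes "GM f"
    and "\<exists>L. ((\<lambda>b. integral {0..b} f) \<longlongrightarrow> L) at_top"
  shows "((\<lambda>t. t * f t) \<longlongrightarrow> 0) at_top"
proof -
  from assms(1) have absint: "\<And>b. b \<ge> 0 \<Longrightarrow> f absolutely_integrable_on {0..b}"
    and bv: "\<And>u v. 0 < u \<Longrightarrow> u \<le> v \<Longrightarrow> bv_on f u v"
    and lim0: "(f \<longlongrightarrow> 0) at_top" unfolding GM_def by auto
  from assms(1) obtain C lam where C: "C > 1" and lam: "lam > 1"
    and gm: "\<And>x. x > 0 \<Longrightarrow> total_variation f x (2 * x) \<le> C * integral {x / lam .. lam * x} (\<lambda>t. \<bar>f t\<bar> / t)"
    unfolding GM_def by blast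
  obtain L where L: "((\<lambda>b. integral {0..b} f) \<longlongrightarrow> L) at_top" using assms(2) by blast
  have ai: "f absolutely_integrable_on {u..v}" if "0 \<le> u" for u v
    by (rule absolutely_integrable_on_subinterval[OF absint[of "max u v"]]) (use that in auto)
  have fint: "f integrable_on {u..v}" if "0 \<le> u" for u v
    using ai[OF that] unfolding absolutely_integrable_on_def by simp
  have intabs: "(\<lambda>t. \<bar>f t\<bar>) integrable_on {u..v}" if "0 \<le> u" for u v
    using ai[OF that] unfolding absolutely_integrable_on_def by simp
  obtain p0 where p0: "lam < 2^p0" using real_arch_pow[of 2 lam] by auto
  define p where "p = Suc p0"
  define M :: real where "M = 2^p"
  have "(2::real)^p0 \<le> 2*2^p0" by simp
  hence lamM: "lam \<le> M" using p0 unfolding M_def p_def power_Suc by linarith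
  have M2: "M \<ge> 2" unfolding M_def p_def using one_le_power[of "2::real" p0] by simp
  define n :: nat where "n = nat \<lceil>4*p*C*M*M\<rceil> + 1"
  have n: "n > 0" by (simp add: n_def)
  have nge: "real n \<ge> 4*p*C*M*M" unfolding n_def by linarith
  define \<theta> where "\<theta> = C*M/n"
  have th: "\<theta> \<ge> 0" using C M2 by (simp add: \<theta>_def)
  have coef: "real (2*p)*\<theta>*M \<le> 1/2"
  proof -
    have "real (2*p)*\<theta>*M = 2*p*C*M*M/n" by (simp add: \<theta>_def)
    also have "\<dots> \<le> 1/2" using nge n by (simp add: divide_simps)
    finally show ?thesis .
  qed
  define K :: real where "K = 2*p*n"
  have K0: "K \<ge> 0" by (simp add: K_def)
  have Psi0: "\<forall>e>0. \<exists>X. \<forall>x\<ge>X. Psi f M x \<le> e"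
  proof (intro allI impI)
    fix e :: real assume e: "e > 0"
    define \<epsilon> where "\<epsilon> = e/(2*K+2)"
    have eps: "\<epsilon> > 0" using e K0 by (simp add: \<epsilon>_def)
    from L have "eventually (\<lambda>b. dist (integral {0..b} f) L < \<epsilon>/2) at_top"
      using eps tendstoD[OF L, of "\<epsilon>/2"] by simp
    then obtain Xa where Xa: "\<And>b. b \<ge> Xa \<Longrightarrow> \<bar>integral {0..b} f - L\<bar> < \<epsilon>/2"
      by (auto simp: eventually_at_top_linorder dist_real_def)
    from lim0 have "eventually (\<lambda>t. dist (f t) 0 < 1) at_top" by (simp add: tendsto_iff)
    then obtain Xb where Xb: "\<And>t. t \<ge> Xb \<Longrightarrow> \<bar>f t\<bar> < 1"
      by (auto simp: eventually_at_top_linorder dist_real_def)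
    define X0 where "X0 = max (max Xa Xb) 1"
    have X0: "X0 \<ge> 1" "X0 \<ge> Xa" "X0 \<ge> Xb" by (auto simp: X0_def)
    have Dc: "\<bar>integral {u..v} f\<bar> \<le> \<epsilon>" if "X0 \<le> u" "u \<le> v" for u v
    proof -
      have "integral {0..u} f + integral {u..v} f = integral {0..v} f"
        by (rule Henstock_Kurzweil_Integration.integral_combine) (use that X0 in \<open>auto intro!: fint\<close>)
      moreover have "\<bar>integral {0..u} f - L\<bar> < \<epsilon>/2" "\<bar>integral {0..v} f - L\<bar> < \<epsilon>/2"
        using Xa that X0 by auto
      ultimately show ?thesis by linarith
    qed
    define X1 where "X1 = M * X0"
    have X1: "X1 > 0" using X0 M2 by (simp add: X1_def)
    have "\<exists>X. \<forall>x\<ge>X. Psi f M x \<le> 2*(K*\<epsilon>) + \<epsilon>"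
    proof (rule abstract_decay[where g = "\<lambda>i x. x*2^i/M" and q = "2*p" and M = M and ?X1.0 = X1
          and ?B0.0 = "integral {X1/M..M*(M*X1)} (\<lambda>t. \<bar>f t\<bar>)" and \<theta> = \<theta>])
      show "1 \<le> M" using M2 by simp
      show "0 < X1" by fact
      show "0 \<le> Psi f M x" for x by (rule Psi_nonneg)
      show "Psi f M x \<le> M * x" if x: "X1 \<le> x" for x
      proof -
        have xp: "x > 0" using x X1 by simp
        have xM: "x/M \<ge> X0" using x M2 by (simp add: X1_def field_simps)
        have "Psi f M x \<le> integral {x/M..M*x} (\<lambda>t. 1::real)" unfolding Psi_def
        proof (rule integral_le)
          show "(\<lambda>t. \<bar>f t\<bar>) integrable_on {x / M..M * x}" using xp M2 by (intro intabs) simp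
          fix t assume "t \<in> {x / M..M * x}"
          hence "t \<ge> Xb" using xM X0 by auto
          thus "\<bar>f t\<bar> \<le> 1" using Xb by (simp add: less_imp_le)
        qed auto
        also have "\<dots> \<le> M*x"
        proof -
          have "x/M \<le> M*x" using xp M2 by (simp add: field_simps) (smt (verit) mult_le_cancel_left1 mult_right_mono xp)
          thus ?thesis using xp M2 by simp
        qed
        finally show ?thesis .
      qed
      show "Psi f M x \<le> integral {X1/M..M*(M*X1)} (\<lambda>t. \<bar>f t\<bar>)" if "X1 \<le> x" "x \<le> M * X1" for x
        unfolding Psi_def
      proof (rule integral_subset_le)
        show "{x / M..M * x} \<subseteq> {X1 / M..M * (M * X1)}" using that M2 X1
          by (auto simp: field_simps intro: order_trans divide_right_mono mult_left_mono)
      qed (use that M2 X1 in \<open>auto intro!: intabs\<close>)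
      show "x / M \<le> x * 2 ^ i / M \<and> x * 2 ^ i / M \<le> M * x" if "i < 2*p" "x > 0" for i x
      proof
        have "(1::real) \<le> 2^i" by simp
        thus "x / M \<le> x * 2 ^ i / M" using that M2 by (intro divide_right_mono) auto
        have "(2::real)^i \<le> 2^(2*p)" using that by (intro power_increasing) auto
        also have "(2::real)^(2*p) = M*M" by (simp add: M_def mult_2 power_add)
        finally have "x * 2^i \<le> x * (M*M)" using that by simp
        thus "x * 2 ^ i / M \<le> M * x" using M2 by (simp add: field_simps)
      qed
      show "Psi f M x \<le> K*\<epsilon> + \<theta> * (\<Sum>i<2*p. Psi f M (x*2^i/M))" if x: "X1 \<le> x" for x
      proof -
        have xp: "x > 0" using x X1 by simp
        have Dx: "\<bar>integral {u..v} f\<bar> \<le> \<epsilon>" if uv: "x / M \<le> u" "u \<le> v" "v \<le> M * x" for u v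
        proof -
          have "x/M \<ge> X0" using x M2 by (simp add: X1_def field_simps)
          thus ?thesis using uv by (intro Dc) auto
        qed
        have Cp: "C > 0" using C by simp
        note recur[OF bv intabs gm lam lamM Cp M_def xp n Dx]
        thus ?thesis by (simp add: K_def \<theta>_def mult.assoc)
      qed
    qed (use coef th K0 eps in auto)
    moreover have "2*(K*\<epsilon>) + \<epsilon> < e"
    proof -
      have "2*(K*\<epsilon>) + \<epsilon> = (2*K+1)*\<epsilon>" by (simp add: algebra_simps)
      also have "\<dots> < (2*K+2)*\<epsilon>" using eps by simp
      also have "\<dots> = e" using K0 by (simp add: \<epsilon>_def)
      finally show ?thesis .
    qed
    ultimately show "\<exists>X. \<forall>x\<ge>X. Psi f M x \<le> e" by (meson less_imp_le order_trans)
  qed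
  show ?thesis
  proof (rule tendstoI)
    fix e :: real assume e: "e > 0"
    define c where "c = 1 + C*M"
    have c: "c > 0" using C M2 by (simp add: c_def add_pos_pos)
    obtain X where X: "\<And>x. x \<ge> X \<Longrightarrow> Psi f M x \<le> e/(2*c)" using Psi0 e c by (meson divide_pos_pos mult_pos_pos zero_less_numeral)
    show "eventually (\<lambda>t. dist (t * f t) 0 < e) at_top"
      unfolding eventually_at_top_linorder
    proof (intro exI[of _ "max X 1"] allI impI)
      fix x assume x: "x \<ge> max X 1"
      have "\<bar>x * f x\<bar> \<le> c * Psi f M x" unfolding c_def
        by (rule final_bound[OF bv intabs gm lam lamM M2]) (use C x in auto)
      also have "\<dots> \<le> c * (e/(2*c))" using X[of x] x c by (intro mult_left_mono) auto
      also have "\<dots> < e" using c e by simp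
      finally show "dist (x * f x) 0 < e" by (simp add: dist_real_def)
    qed
  qed
qed

end
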